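(* Let $A$ be an associative unital ring and $\mathfrak{C}$ an $A$-coring with coproduct $\Delta$ and counit $\varepsilon$ (Sweedler notation $\Delta(c)=c_{(1)}\otimes_A c_{(2)}$). Consider pairs $(\pi,\Theta)$, where $\Theta:A\to\mathfrak{C}$ is an $(A,A)$-bimodule map and $\pi:\mathfrak{C}\otimes_A\mathfrak{C}\to\mathfrak{C}$ is an $(A,A)$-bimodule map which is a $(\mathfrak{C},\mathfrak{C})$-bicomodule map, i.e. $c_{(1)}\otimes_A\pi(c_{(2)}\otimes_A c')=\Delta(\pi(c\otimes_A c'))=\pi(c\otimes_A c'_{(1)})\otimes_A c'_{(2)}$ for all $c,c'\in\mathfrak{C}$, such that $\pi\circ(I_{\mathfrak{C}}\otimes_A\Theta)=\pi\circ(\Theta\otimes_A I_{\mathfrak{C}})=I_{\mathfrak{C}}$ (using the identifications $\mathfrak{C}\cong\mathfrak{C}\otimes_A A\cong A\otimes_A\mathfrak{C}$). Consider also reduced Frobenius systems $(\gamma,e)$ for $\mathfrak{C}$, i.e. pairs consisting of an element $e\in\mathfrak{C}^A=\{c\in\mathfrak{C}\mid ac=ca\ \forall a\in A\}$ and an $(A,A)$-bimodule map $\gamma:\mathfrak{C}\otimes_A\mathfrak{C}\to A$ such that for all $c,c'\in\mathfrak{C}$: $c_{(1)}\gamma(c_{(2)}\otimes_A c')=\gamma(c\otimes_A c'_{(1)})c'_{(2)}$ and $\gamma(c\otimes_A e)=\gamma(e\otimes_A c)=\varepsilon(c)$. Then the pairs $(\pi,\Theta)$ are in one-to-one correspondence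 with the reduced Frobenius systems $(\gamma,e)$, via $(\pi,\Theta)\mapsto(\varepsilon\circ\pi,\Theta(1_A))$.
   Context: An $A$-coring $\mathfrak{C}$ is an $(A,A)$-bimodule with $(A,A)$-bimodule maps $\Delta:\mathfrak{C}\to\mathfrak{C}\otimes_A\mathfrak{C}$ and $\varepsilon:\mathfrak{C}\to A$ satisfying coassociativity $(I_{\mathfrak{C}}\otimes_A\Delta)\circ\Delta=(\Delta\otimes_A I_{\mathfrak{C}})\circ\Delta$ and counitality $(I_{\mathfrak{C}}\otimes_A\varepsilon)\circ\Delta=(\varepsilon\otimes_A I_{\mathfrak{C}})\circ\Delta=I_{\mathfrak{C}}$. The $(\mathfrak{C},\mathfrak{C})$-bicomodule structures are: on $\mathfrak{C}$ both coactions are $\Delta$; on $\mathfrak{C}\otimes_A\mathfrak{C}$ the left coaction is $\Delta\otimes_A I_{\mathfrak{C}}$ and the right coaction is $I_{\mathfrak{C}}\otimes_A\Delta$. *)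

theory Defs
  imports Main
begin

definition is_bimodule :: "('a::ring_1 \<Rightarrow> 'm::ab_group_add \<Rightarrow> 'm) \<Rightarrow> ('m \<Rightarrow> 'a \<Rightarrow> 'm) \<Rightarrow> bool" where
  "is_bimodule l r \<longleftrightarrow>
     (\<forall>a x y. l a (x + y) = l a x + l a y) \<and> (\<forall>a b x. l (a + b) x = l a x + l b x) \<and>
     (\<forall>a b x. l (a * b) x = l a (l b x)) \<and> (\<forall>x. l 1 x = x) \<and>
     (\<forall>a x y. r (x + y) a = r x a + r y a) \<and> (\<forall>a b x. r x (a + b) = r x a + r x b) \<and>
     (\<forall>a b x. r x (a * b) = r (r x a) b) \<and> (\<forall>x. r x 1 = x) \<and>
     (\<forall>a x b. r (l a x) b = l a (r x b))"

definition bimod_hom ::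
  "('a::ring_1 \<Rightarrow> 'm::ab_group_add \<Rightarrow> 'm) \<Rightarrow> ('m \<Rightarrow> 'a \<Rightarrow> 'm) \<Rightarrow>
   ('a \<Rightarrow> 'n::ab_group_add \<Rightarrow> 'n) \<Rightarrow> ('n \<Rightarrow> 'a \<Rightarrow> 'n) \<Rightarrow> ('m \<Rightarrow> 'n) \<Rightarrow> bool" where
  "bimod_hom l1 r1 l2 r2 f \<longleftrightarrow>
     (\<forall>x y. f (x + y) = f x + f y) \<and> (\<forall>a x. f (l1 a x) = l2 a (f x)) \<and> (\<forall>x a. f (r1 x a) = r2 (f x) a)"

definition balanced :: "('m::ab_group_add \<Rightarrow> 'a::ring_1 \<Rightarrow> 'm) \<Rightarrow> ('a \<Rightarrow> 'n::ab_group_add \<Rightarrow> 'n)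
     \<Rightarrow> ('m \<Rightarrow> 'n \<Rightarrow> 'g::ab_group_add) \<Rightarrow> bool" where
  "balanced rM lN \<phi> \<longleftrightarrow>
     (\<forall>x x' y. \<phi> (x + x') y = \<phi> x y + \<phi> x' y) \<and> (\<forall>x y y'. \<phi> x (y + y') = \<phi> x y + \<phi> x y') \<and>
     (\<forall>x a y. \<phi> (rM x a) y = \<phi> x (lN a y))"

definition zmul :: "int \<Rightarrow> 'g::ab_group_add \<Rightarrow> 'g" where
  "zmul k x = (if 0 \<le> k then (\<Sum>i<nat k. x) else - (\<Sum>i<nat (- k). x))"

text \<open>Basis elements of the free abelian group on M \<times> N (finitely supported int-valued functions).\<close>
definition delta :: "'p \<Rightarrow> 'p \<Rightarrow> int" where
  "delta p = (\<lambda>q. if q = p then 1 else 0)"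

inductive_set trel :: "('m::ab_group_add \<Rightarrow> 'a::ring_1 \<Rightarrow> 'm) \<Rightarrow> ('a \<Rightarrow> 'n::ab_group_add \<Rightarrow> 'n)
     \<Rightarrow> ('m \<times> 'n \<Rightarrow> int) set"
  for rM lN where
    trel_zero: "(\<lambda>q. 0) \<in> trel rM lN"
  | trel_diff: "f \<in> trel rM lN \<Longrightarrow> g \<in> trel rM lN \<Longrightarrow> (\<lambda>q. f q - g q) \<in> trel rM lN"
  | trel_addl: "(\<lambda>q. delta (x + x', y) q - delta (x, y) q - delta (x', y) q) \<in> trel rM lN"
  | trel_addr: "(\<lambda>q. delta (x, y + y') q - delta (x, y) q - delta (x, y') q) \<in> trel rM lN"
  | trel_bal: "(\<lambda>q. delta (rM x a, y) q - delta (x, lN a y) q) \<in> trel rM lN"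

definition fsum :: "('m \<Rightarrow> 'n \<Rightarrow> 't::ab_group_add) \<Rightarrow> ('m \<times> 'n \<Rightarrow> int) \<Rightarrow> 't" where
  "fsum tens f = (\<Sum>p\<in>{p. f p \<noteq> 0}. zmul (f p) (tens (fst p) (snd p)))"

text \<open>(T, lT, rT, tens) is a tensor product M \<otimes>_A N of the bimodules M and N, with x \<otimes> y = tens x y:
  tens is balanced biadditive, T is generated by pure tensors, and the kernel of the canonical map from
  the free abelian group on M \<times> N onto T is exactly the relation subgroup; the bimodule structure of T
  is a(x \<otimes> y)b = (ax) \<otimes> (yb).\<close>
definition is_tensor ::
  "('a::ring_1 \<Rightarrow> 'm::ab_group_add \<Rightarrow> 'm) \<Rightarrow> ('m \<Rightarrow> 'a \<Rightarrow> 'm) \<Rightarrow>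
   ('a \<Rightarrow> 'n::ab_group_add \<Rightarrow> 'n) \<Rightarrow> ('n \<Rightarrow> 'a \<Rightarrow> 'n) \<Rightarrow>
   ('a \<Rightarrow> 't::ab_group_add \<Rightarrow> 't) \<Rightarrow> ('t \<Rightarrow> 'a \<Rightarrow> 't) \<Rightarrow> ('m \<Rightarrow> 'n \<Rightarrow> 't) \<Rightarrow> bool" where
  "is_tensor lM rM lN rN lT rT tens \<longleftrightarrow>
     is_bimodule lT rT \<and> balanced rM lN tens \<and>
     (\<forall>a x y. lT a (tens x y) = tens (lM a x) y) \<and>
     (\<forall>x y a. rT (tens x y) a = tens x (rN y a)) \<and>
     (\<forall>t. \<exists>xs. t = sum_list (map (\<lambda>(x, y). tens x y) xs)) \<and>
     (\<forall>f. finite {p. f p \<noteq> 0} \<and> fsum tens f = 0 \<longrightarrow> f \<in> trel rM lN)"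

text \<open>The additive map T \<rightarrow> G induced by a balanced biadditive map \<phi>: x \<otimes> y \<mapsto> \<phi> x y
  (well defined when T is a tensor product and \<phi> is balanced).\<close>
definition tlift :: "('m \<Rightarrow> 'n \<Rightarrow> 't::ab_group_add) \<Rightarrow> ('m \<Rightarrow> 'n \<Rightarrow> 'g::ab_group_add) \<Rightarrow> 't \<Rightarrow> 'g" where
  "tlift tens \<phi> t = (SOME g. \<exists>xs. t = sum_list (map (\<lambda>(x, y). tens x y) xs) \<and>
                                   g = sum_list (map (\<lambda>(x, y). \<phi> x y) xs))"

text \<open>C (with actions lC, rC) is an A-coring with coproduct \<Delta> : C \<rightarrow> C \<otimes>_A C (= T, via tens) and
  counit \<epsilon>; coassociativity is stated in C \<otimes>_A (C \<otimes>_A C) (= L, via tensL), identifying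
  (C \<otimes> C) \<otimes> C with C \<otimes> (C \<otimes> C); counitality uses C \<otimes>_A A \<cong> C \<cong> A \<otimes>_A C.\<close>
definition is_coring ::
  "('a::ring_1 \<Rightarrow> 'c::ab_group_add \<Rightarrow> 'c) \<Rightarrow> ('c \<Rightarrow> 'a \<Rightarrow> 'c) \<Rightarrow>
   ('a \<Rightarrow> 't::ab_group_add \<Rightarrow> 't) \<Rightarrow> ('t \<Rightarrow> 'a \<Rightarrow> 't) \<Rightarrow> ('c \<Rightarrow> 'c \<Rightarrow> 't) \<Rightarrow>
   ('a \<Rightarrow> 'l::ab_group_add \<Rightarrow> 'l) \<Rightarrow> ('l \<Rightarrow> 'a \<Rightarrow> 'l) \<Rightarrow> ('c \<Rightarrow> 't \<Rightarrow> 'l) \<Rightarrow>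
   ('c \<Rightarrow> 't) \<Rightarrow> ('c \<Rightarrow> 'a) \<Rightarrow> bool" where
  "is_coring lC rC lT rT tens lL rL tensL \<Delta> \<epsilon> \<longleftrightarrow>
     is_bimodule lC rC \<and>
     is_tensor lC rC lC rC lT rT tens \<and>
     is_tensor lC rC lT rT lL rL tensL \<and>
     bimod_hom lC rC lT rT \<Delta> \<and>
     bimod_hom lC rC (*) (*) \<epsilon> \<and>
     (\<forall>c. tlift tens (\<lambda>x y. tensL x (\<Delta> y)) (\<Delta> c) =
          tlift tens (\<lambda>x y. tlift tens (\<lambda>u v. tensL u (tens v y)) (\<Delta> x)) (\<Delta> c)) \<and>
     (\<forall>c. tlift tens (\<lambda>x y. rC x (\<epsilon> y)) (\<Delta> c) = c) \<and>
     (\<forall>c. tlift tens (\<lambda>x y. lC (\<epsilon> x) y) (\<Delta> c) = c)"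

definition pi_theta_pair ::
  "('a::ring_1 \<Rightarrow> 'c::ab_group_add \<Rightarrow> 'c) \<Rightarrow> ('c \<Rightarrow> 'a \<Rightarrow> 'c) \<Rightarrow>
   ('a \<Rightarrow> 't::ab_group_add \<Rightarrow> 't) \<Rightarrow> ('t \<Rightarrow> 'a \<Rightarrow> 't) \<Rightarrow> ('c \<Rightarrow> 'c \<Rightarrow> 't) \<Rightarrow>
   ('c \<Rightarrow> 't) \<Rightarrow> ('t \<Rightarrow> 'c) \<Rightarrow> ('a \<Rightarrow> 'c) \<Rightarrow> bool" where
  "pi_theta_pair lC rC lT rT tens \<Delta> \<pi> \<Theta> \<longleftrightarrow>
     bimod_hom (*) (*) lC rC \<Theta> \<and>
     bimod_hom lT rT lC rC \<pi> \<and>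
     (\<forall>c c'. tlift tens (\<lambda>x y. tens x (\<pi> (tens y c'))) (\<Delta> c) = \<Delta> (\<pi> (tens c c')) \<and>
             \<Delta> (\<pi> (tens c c')) = tlift tens (\<lambda>x y. tens (\<pi> (tens c x)) y) (\<Delta> c')) \<and>
     (\<forall>c. \<pi> (tens c (\<Theta> 1)) = c) \<and> (\<forall>c. \<pi> (tens (\<Theta> 1) c) = c)"

definition reduced_frobenius_system ::
  "('a::ring_1 \<Rightarrow> 'c::ab_group_add \<Rightarrow> 'c) \<Rightarrow> ('c \<Rightarrow> 'a \<Rightarrow> 'c) \<Rightarrow>
   ('a \<Rightarrow> 't::ab_group_add \<Rightarrow> 't) \<Rightarrow> ('t \<Rightarrow> 'a \<Rightarrow> 't) \<Rightarrow> ('c \<Rightarrow> 'c \<Rightarrow> 't) \<Rightarrow>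
   ('c \<Rightarrow> 't) \<Rightarrow> ('c \<Rightarrow> 'a) \<Rightarrow> ('t \<Rightarrow> 'a) \<Rightarrow> 'c \<Rightarrow> bool" where
  "reduced_frobenius_system lC rC lT rT tens \<Delta> \<epsilon> \<gamma> e \<longleftrightarrow>
     (\<forall>a. lC a e = rC e a) \<and>
     bimod_hom lT rT (*) (*) \<gamma> \<and>
     (\<forall>c c'. tlift tens (\<lambda>x y. rC x (\<gamma> (tens y c'))) (\<Delta> c) =
             tlift tens (\<lambda>x y. lC (\<gamma> (tens c x)) y) (\<Delta> c')) \<and>
     (\<forall>c. \<gamma> (tens c e) = \<epsilon> c) \<and> (\<forall>c. \<gamma> (tens e c) = \<epsilon> c)"

end

theory Submission
  imports Defs
begin

definition natmul :: "nat \<Rightarrow> 'g::ab_group_add \<Rightarrow> 'g" where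
  "natmul n x = (\<Sum>i<n. x)"

lemma natmul_add: "natmul (m + n) x = natmul m x + natmul n x"
  by (induction n) (simp_all add: natmul_def add.assoc)

lemma zmul_alt: "zmul k x = natmul (nat k) x - natmul (nat (- k)) x"
  by (simp add: zmul_def natmul_def)

lemma zmul_0[simp]: "zmul 0 x = 0" by (simp add: zmul_def)
lemma zmul_1[simp]: "zmul 1 x = x" by (simp add: zmul_def)

lemma zmul_add: "zmul (k + l) x = zmul k x + zmul l x"
proof -
  have e: "nat (k + l) + nat (- k) + nat (- l) = nat (- (k + l)) + nat k + nat l" by simp
  have "natmul (nat (k + l)) x + natmul (nat (- k)) x + natmul (nat (- l)) x
      = natmul (nat (- (k + l))) x + natmul (nat k) x + natmul (nat l) x"
    using arg_cong[OF e, of "\<lambda>n. natmul n x"] by (simp add: natmul_add)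
  then show ?thesis unfolding zmul_alt by (simp add: algebra_simps)
qed

lemma zmul_diff: "zmul (k - l) x = zmul k x - zmul l x"
proof -
  have "zmul (k - l) x + zmul l x = zmul k x" by (simp add: zmul_add[symmetric])
  then show ?thesis by (simp add: algebra_simps)
qed

lemma fsum_superset:
  assumes "finite S" "{p. f p \<noteq> 0} \<subseteq> S"
  shows "fsum h f = (\<Sum>p\<in>S. zmul (f p) (h (fst p) (snd p)))"
  unfolding fsum_def
  by (rule sum.mono_neutral_left) (use assms in auto)

lemma fsum_diff:
  assumes "finite {p. f p \<noteq> 0}" "finite {p. g p \<noteq> 0}"
  shows "fsum h (\<lambda>q. f q - g q) = fsum h f - fsum h g"
proof -
  let ?S = "{p. f p \<noteq> 0} \<union> {p. g p \<noteq> 0}"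
  have "fsum h (\<lambda>q. f q - g q) = (\<Sum>p\<in>?S. zmul (f p - g p) (h (fst p) (snd p)))"
    by (rule fsum_superset) (use assms in auto)
  also have "\<dots> = (\<Sum>p\<in>?S. zmul (f p) (h (fst p) (snd p))) - (\<Sum>p\<in>?S. zmul (g p) (h (fst p) (snd p)))"
    by (simp add: zmul_diff sum_subtractf)
  also have "\<dots> = fsum h f - fsum h g"
    using fsum_superset[of ?S f h] fsum_superset[of ?S g h] assms by auto
  finally show ?thesis .
qed

lemma fsum_add:
  assumes "finite {p. f p \<noteq> 0}" "finite {p. g p \<noteq> 0}"
  shows "fsum h (\<lambda>q. f q + g q) = fsum h f + fsum h g"
proof -
  let ?S = "{p. f p \<noteq> 0} \<union> {p. g p \<noteq> 0}"
  have "fsum h (\<lambda>q. f q + g q) = (\<Sum>p\<in>?S. zmul (f p + g p) (h (fst p) (snd p)))"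
    by (rule fsum_superset) (use assms in auto)
  also have "\<dots> = (\<Sum>p\<in>?S. zmul (f p) (h (fst p) (snd p))) + (\<Sum>p\<in>?S. zmul (g p) (h (fst p) (snd p)))"
    by (simp add: zmul_add sum.distrib)
  also have "\<dots> = fsum h f + fsum h g"
    using fsum_superset[of ?S f h] fsum_superset[of ?S g h] assms by auto
  finally show ?thesis .
qed

lemma delta_supp: "{q. delta p q \<noteq> 0} = {p}"
  by (auto simp: delta_def)

lemma fsum_delta: "fsum h (delta p) = h (fst p) (snd p)"
  unfolding fsum_def delta_supp by (simp add: delta_def)

lemma trel_fsum:
  assumes "balanced rM lN \<phi>" "f \<in> trel rM lN"
  shows "finite {p. f p \<noteq> 0} \<and> fsum \<phi> f = 0"
  using assms(2)
proof induction
  case trel_zero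
  then show ?case by (simp add: fsum_def)
next
  case (trel_diff f g)
  then show ?case
    by (auto simp: fsum_diff intro: finite_subset[of _ "{p. f p \<noteq> 0} \<union> {p. g p \<noteq> 0}"])
next
  case (trel_addl x x' y)
  let ?a = "delta (x + x', y)" and ?b = "delta (x, y)" and ?c = "delta (x', y)"
  have fa: "finite {q. ?a q \<noteq> 0}" "finite {q. ?b q \<noteq> 0}" "finite {q. ?c q \<noteq> 0}"
    by (simp_all add: delta_supp)
  have fab: "finite {q. ?a q - ?b q \<noteq> 0}"
    by (rule finite_subset[OF _ finite_UnI[OF fa(1,2)]]) auto
  have "fsum \<phi> (\<lambda>q. ?a q - ?b q - ?c q) = 0"
    using fsum_diff[OF fab fa(3), where h=\<phi>] fsum_diff[OF fa(1,2), where h=\<phi>] assms(1)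
    by (simp add: fsum_delta balanced_def)
  moreover have "finite {q. ?a q - ?b q - ?c q \<noteq> 0}"
    by (rule finite_subset[OF _ finite_UnI[OF fab fa(3)]]) auto
  ultimately show ?case by simp
next
  case (trel_addr x y y')
  let ?a = "delta (x, y + y')" and ?b = "delta (x, y)" and ?c = "delta (x, y')"
  have fa: "finite {q. ?a q \<noteq> 0}" "finite {q. ?b q \<noteq> 0}" "finite {q. ?c q \<noteq> 0}"
    by (simp_all add: delta_supp)
  have fab: "finite {q. ?a q - ?b q \<noteq> 0}"
    by (rule finite_subset[OF _ finite_UnI[OF fa(1,2)]]) auto
  have "fsum \<phi> (\<lambda>q. ?a q - ?b q - ?c q) = 0"
    using fsum_diff[OF fab fa(3), where h=\<phi>] fsum_diff[OF fa(1,2), where h=\<phi>] assms(1)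
    by (simp add: fsum_delta balanced_def)
  moreover have "finite {q. ?a q - ?b q - ?c q \<noteq> 0}"
    by (rule finite_subset[OF _ finite_UnI[OF fab fa(3)]]) auto
  ultimately show ?case by simp
next
  case (trel_bal x a y)
  let ?a = "delta (rM x a, y)" and ?b = "delta (x, lN a y)"
  have fa: "finite {q. ?a q \<noteq> 0}" "finite {q. ?b q \<noteq> 0}"
    by (simp_all add: delta_supp)
  have "fsum \<phi> (\<lambda>q. ?a q - ?b q) = 0"
    using fsum_diff[OF fa(1,2), where h=\<phi>] assms(1)
    by (simp add: fsum_delta balanced_def)
  moreover have "finite {q. ?a q - ?b q \<noteq> 0}"
    by (rule finite_subset[OF _ finite_UnI[OF fa(1,2)]]) auto
  ultimately show ?case by simp
qed

definition cnt :: "'p list \<Rightarrow> 'p \<Rightarrow> int" where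
  "cnt xs q = int (length (filter (\<lambda>p. p = q) xs))"

lemma cnt_supp: "{q. cnt xs q \<noteq> 0} \<subseteq> set xs"
  by (auto simp: cnt_def filter_empty_conv)

lemma fsum_cnt: "fsum h (cnt xs) = sum_list (map (\<lambda>(x, y). h x y) xs)"
proof (induction xs)
  case Nil
  then show ?case by (simp add: cnt_def fsum_def)
next
  case (Cons p xs)
  have "cnt (p # xs) = (\<lambda>q. delta p q + cnt xs q)"
    by (auto simp: cnt_def delta_def)
  then have "fsum h (cnt (p # xs)) = fsum h (delta p) + fsum h (cnt xs)"
    using fsum_add[of "delta p" "cnt xs" h] finite_subset[OF cnt_supp[of xs]]
    by (simp add: delta_supp)
  then show ?case using Cons by (simp add: fsum_delta split: prod.splits)
qed


definition lsum :: "('m \<Rightarrow> 'n \<Rightarrow> 'g::ab_group_add) \<Rightarrow> ('m \<times> 'n) list \<Rightarrow> 'g" where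
  "lsum \<phi> xs = sum_list (map (\<lambda>(x, y). \<phi> x y) xs)"

definition addf :: "('g::ab_group_add \<Rightarrow> 'h::ab_group_add) \<Rightarrow> bool" where
  "addf g \<longleftrightarrow> (\<forall>x y. g (x + y) = g x + g y)"

lemma addf_0: "addf g \<Longrightarrow> g 0 = 0"
  unfolding addf_def by (metis add_cancel_right_right add_0)

lemma addf_sum_list: "addf g \<Longrightarrow> g (sum_list xs) = sum_list (map g xs)"
  by (induction xs) (auto simp: addf_0 addf_def)

lemma lsum_append: "lsum \<phi> (xs @ ys) = lsum \<phi> xs + lsum \<phi> ys"
  by (simp add: lsum_def)

lemma addf_lsum: "addf g \<Longrightarrow> g (lsum \<phi> xs) = lsum (\<lambda>x y. g (\<phi> x y)) xs"
  unfolding lsum_def by (simp add: addf_sum_list o_def case_prod_unfold)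

lemma lsum_fadd: "lsum (\<lambda>x y. \<phi> x y + \<psi> x y) xs = lsum \<phi> xs + lsum \<psi> xs"
  by (induction xs) (auto simp: lsum_def)

lemma lsum_map: "lsum \<phi> (map (\<lambda>(x, y). (f x, g y)) xs) = lsum (\<lambda>x y. \<phi> (f x) (g y)) xs"
  by (induction xs) (auto simp: lsum_def)

lemma tens_rep:
  assumes "is_tensor lM rM lN rN lT rT tens"
  shows "\<exists>xs. t = lsum tens xs"
  using assms unfolding is_tensor_def lsum_def by blast

lemma lsum_welldef:
  assumes T: "is_tensor lM rM lN rN lT rT tens" and B: "balanced rM lN \<phi>"
    and eq: "lsum tens xs = lsum tens ys"
  shows "lsum \<phi> xs = lsum \<phi> ys"
proof -
  let ?f = "\<lambda>q. cnt xs q - cnt ys q"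
  have fx: "finite {q. cnt xs q \<noteq> 0}" "finite {q. cnt ys q \<noteq> 0}"
    using finite_subset[OF cnt_supp] by auto
  have ff: "finite {q. ?f q \<noteq> 0}"
    by (rule finite_subset[OF _ finite_UnI[OF fx]]) auto
  have "fsum tens ?f = 0"
    using fsum_diff[OF fx, where h=tens] eq by (simp add: fsum_cnt lsum_def)
  moreover have K: "\<forall>f. finite {p. f p \<noteq> 0} \<and> fsum tens f = 0 \<longrightarrow> f \<in> trel rM lN"
    using T by (simp add: is_tensor_def)
  ultimately have "?f \<in> trel rM lN" using K[rule_format, of ?f] ff by simp
  then have "fsum \<phi> ?f = 0" using trel_fsum[OF B] by blast
  then show ?thesis using fsum_diff[OF fx, where h=\<phi>] by (simp add: fsum_cnt lsum_def)
qed

lemma tlift_rep: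
  assumes T: "is_tensor lM rM lN rN lT rT tens" and B: "balanced rM lN \<phi>"
    and t: "t = lsum tens xs"
  shows "tlift tens \<phi> t = lsum \<phi> xs"
proof -
  have ex: "\<exists>g. \<exists>xs. t = lsum tens xs \<and> g = lsum \<phi> xs" using t by blast
  have "\<exists>ys. t = lsum tens ys \<and> tlift tens \<phi> t = lsum \<phi> ys"
    unfolding tlift_def using someI_ex[OF ex] by (simp add: lsum_def)
  then obtain ys where "t = lsum tens ys" "tlift tens \<phi> t = lsum \<phi> ys" by blast
  then show ?thesis using lsum_welldef[OF T B, of ys xs] t by simp
qed

lemma tlift_tens:
  assumes T: "is_tensor lM rM lN rN lT rT tens" and B: "balanced rM lN \<phi>"
  shows "tlift tens \<phi> (tens x y) = \<phi> x y"
  using tlift_rep[OF T B, of _ "[(x, y)]"] by (simp add: lsum_def)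

lemma tlift_add:
  assumes T: "is_tensor lM rM lN rN lT rT tens" and B: "balanced rM lN \<phi>"
  shows "tlift tens \<phi> (s + t) = tlift tens \<phi> s + tlift tens \<phi> t"
proof -
  obtain xs ys where "s = lsum tens xs" "t = lsum tens ys" using tens_rep[OF T] by metis
  then have "s + t = lsum tens (xs @ ys)" by (simp add: lsum_append)
  then show ?thesis using tlift_rep[OF T B, of "s + t" "xs @ ys"] tlift_rep[OF T B, of s xs]
      tlift_rep[OF T B, of t ys] \<open>s = _\<close> \<open>t = _\<close> by (simp add: lsum_append)
qed

lemma tlift_addf:
  assumes T: "is_tensor lM rM lN rN lT rT tens" and B: "balanced rM lN \<phi>"
  shows "addf (tlift tens \<phi>)"
  using tlift_add[OF T B] by (simp add: addf_def)

lemma balanced_comp: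
  assumes B: "balanced rM lN \<phi>" and g: "addf g"
  shows "balanced rM lN (\<lambda>x y. g (\<phi> x y))"
  using assms by (simp add: balanced_def addf_def)

lemma tlift_comp:
  assumes T: "is_tensor lM rM lN rN lT rT tens" and B: "balanced rM lN \<phi>" and g: "addf g"
  shows "g (tlift tens \<phi> t) = tlift tens (\<lambda>x y. g (\<phi> x y)) t"
proof -
  obtain xs where "t = lsum tens xs" using tens_rep[OF T] by metis
  then show ?thesis using tlift_rep[OF T B] tlift_rep[OF T balanced_comp[OF B g]] addf_lsum[OF g, of \<phi> xs]
    by simp
qed

lemma tlift_fadd:
  assumes T: "is_tensor lM rM lN rN lT rT tens" and B: "balanced rM lN \<phi>" and B2: "balanced rM lN \<psi>"
  shows "tlift tens (\<lambda>x y. \<phi> x y + \<psi> x y) t = tlift tens \<phi> t + tlift tens \<psi> t"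
proof -
  have B3: "balanced rM lN (\<lambda>x y. \<phi> x y + \<psi> x y)"
    using B B2 by (simp add: balanced_def algebra_simps)
  obtain xs where "t = lsum tens xs" using tens_rep[OF T] by metis
  then show ?thesis using tlift_rep[OF T B] tlift_rep[OF T B2] tlift_rep[OF T B3] lsum_fadd
    by simp
qed

lemma tlift_lact:
  assumes T: "is_tensor lM rM lN rN lT rT tens" and B: "balanced rM lN \<phi>" and h: "addf h"
    and H: "\<And>x y. \<phi> (lM a x) y = h (\<phi> x y)"
  shows "tlift tens \<phi> (lT a t) = h (tlift tens \<phi> t)"
proof -
  obtain xs where t: "t = lsum tens xs" using tens_rep[OF T] by metis
  have la: "addf (lT a)" using T by (simp add: is_tensor_def is_bimodule_def addf_def)
  have "lT a t = lsum (\<lambda>x y. lT a (tens x y)) xs" using addf_lsum[OF la] t by simp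
  also have "\<dots> = lsum tens (map (\<lambda>(x, y). (lM a x, id y)) xs)"
    using T by (simp add: lsum_map is_tensor_def)
  finally have "tlift tens \<phi> (lT a t) = lsum (\<lambda>x y. \<phi> (lM a x) y) xs"
    using tlift_rep[OF T B] lsum_map[of \<phi> "lM a" id xs] by simp
  also have "\<dots> = h (tlift tens \<phi> t)"
    using H addf_lsum[OF h, of \<phi> xs] tlift_rep[OF T B t] by simp
  finally show ?thesis .
qed

lemma tlift_ract:
  assumes T: "is_tensor lM rM lN rN lT rT tens" and B: "balanced rM lN \<phi>" and h: "addf h"
    and H: "\<And>x y. \<phi> x (rN y a) = h (\<phi> x y)"
  shows "tlift tens \<phi> (rT t a) = h (tlift tens \<phi> t)"
proof -
  obtain xs where t: "t = lsum tens xs" using tens_rep[OF T] by metis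
  have la: "addf (\<lambda>s. rT s a)" using T by (simp add: is_tensor_def is_bimodule_def addf_def)
  have "rT t a = lsum (\<lambda>x y. rT (tens x y) a) xs" using addf_lsum[OF la] t by simp
  also have "\<dots> = lsum tens (map (\<lambda>(x, y). (id x, rN y a)) xs)"
    using T by (simp add: lsum_map is_tensor_def)
  finally have "tlift tens \<phi> (rT t a) = lsum (\<lambda>x y. \<phi> x (rN y a)) xs"
    using tlift_rep[OF T B] lsum_map[of \<phi> id "\<lambda>y. rN y a" xs] by simp
  also have "\<dots> = h (tlift tens \<phi> t)"
    using H addf_lsum[OF h, of \<phi> xs] tlift_rep[OF T B t] by simp
  finally show ?thesis .
qed

lemma tens_ext:
  assumes T: "is_tensor lM rM lN rN lT rT tens" and f: "addf f" and g: "addf g"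
    and E: "\<And>x y. f (tens x y) = g (tens x y)"
  shows "f t = g t"
proof -
  obtain xs where t: "t = lsum tens xs" using tens_rep[OF T] by metis
  show ?thesis using addf_lsum[OF f, of tens xs] addf_lsum[OF g, of tens xs] E t by simp
qed


lemma tlift_lact':
  assumes T: "is_tensor lM rM lN rN lT rT tens" and B: "balanced rM lN \<phi>"
    and B2: "balanced rM lN (\<lambda>x y. \<phi> (lM a x) y)"
  shows "tlift tens \<phi> (lT a t) = tlift tens (\<lambda>x y. \<phi> (lM a x) y) t"
proof -
  obtain xs where t: "t = lsum tens xs" using tens_rep[OF T] by metis
  have la: "addf (lT a)" using T by (simp add: is_tensor_def is_bimodule_def addf_def)
  have "lT a t = lsum (\<lambda>x y. lT a (tens x y)) xs" using addf_lsum[OF la] t by simp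
  also have "\<dots> = lsum tens (map (\<lambda>(x, y). (lM a x, id y)) xs)"
    using T by (simp add: lsum_map is_tensor_def)
  finally show ?thesis
    using tlift_rep[OF T B] lsum_map[of \<phi> "lM a" id xs] tlift_rep[OF T B2 t] by simp
qed

lemma tlift_ract':
  assumes T: "is_tensor lM rM lN rN lT rT tens" and B: "balanced rM lN \<phi>"
    and B2: "balanced rM lN (\<lambda>x y. \<phi> x (rN y a))"
  shows "tlift tens \<phi> (rT t a) = tlift tens (\<lambda>x y. \<phi> x (rN y a)) t"
proof -
  obtain xs where t: "t = lsum tens xs" using tens_rep[OF T] by metis
  have la: "addf (\<lambda>s. rT s a)" using T by (simp add: is_tensor_def is_bimodule_def addf_def)
  have "rT t a = lsum (\<lambda>x y. rT (tens x y) a) xs" using addf_lsum[OF la] t by simp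
  also have "\<dots> = lsum tens (map (\<lambda>(x, y). (id x, rN y a)) xs)"
    using T by (simp add: lsum_map is_tensor_def)
  finally show ?thesis
    using tlift_rep[OF T B] lsum_map[of \<phi> id "\<lambda>y. rN y a" xs] tlift_rep[OF T B2 t] by simp
qed

locale cor =
  fixes lC :: "'a::ring_1 \<Rightarrow> 'c::ab_group_add \<Rightarrow> 'c" and rC :: "'c \<Rightarrow> 'a \<Rightarrow> 'c"
    and lT :: "'a \<Rightarrow> 't::ab_group_add \<Rightarrow> 't" and rT :: "'t \<Rightarrow> 'a \<Rightarrow> 't"
    and tens :: "'c \<Rightarrow> 'c \<Rightarrow> 't"
    and lL :: "'a \<Rightarrow> 'l::ab_group_add \<Rightarrow> 'l" and rL :: "'l \<Rightarrow> 'a \<Rightarrow> 'l"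
    and tensL :: "'c \<Rightarrow> 't \<Rightarrow> 'l"
    and \<Delta> :: "'c \<Rightarrow> 't" and \<epsilon> :: "'c \<Rightarrow> 'a"
  assumes C: "is_coring lC rC lT rT tens lL rL tensL \<Delta> \<epsilon>"
begin

lemma TT: "is_tensor lC rC lC rC lT rT tens" using C by (simp add: is_coring_def)
lemma TL: "is_tensor lC rC lT rT lL rL tensL" using C by (simp add: is_coring_def)

lemma coassoc: "tlift tens (\<lambda>x y. tensL x (\<Delta> y)) (\<Delta> c) =
          tlift tens (\<lambda>x y. tlift tens (\<lambda>u v. tensL u (tens v y)) (\<Delta> x)) (\<Delta> c)"
  using C by (simp add: is_coring_def)
lemma cuR: "tlift tens (\<lambda>x y. rC x (\<epsilon> y)) (\<Delta> c) = c"
  using C by (simp add: is_coring_def)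
lemma cuL: "tlift tens (\<lambda>x y. lC (\<epsilon> x) y) (\<Delta> c) = c"
  using C by (simp add: is_coring_def)

lemma bmC:
  "lC a (x + y) = lC a x + lC a y" "lC (a + b) x = lC a x + lC b x"
  "lC (a * b) x = lC a (lC b x)" "lC 1 x = x"
  "rC (x + y) a = rC x a + rC y a" "rC x (a + b) = rC x a + rC x b"
  "rC x (a * b) = rC (rC x a) b" "rC x 1 = x" "rC (lC a x) b = lC a (rC x b)"
  using C by (simp_all add: is_coring_def is_bimodule_def)

lemma bmT:
  "lT a (s + t) = lT a s + lT a t" "lT (a + b) s = lT a s + lT b s"
  "lT (a * b) s = lT a (lT b s)" "lT 1 s = s"
  "rT (s + t) a = rT s a + rT t a" "rT s (a + b) = rT s a + rT s b"
  "rT s (a * b) = rT (rT s a) b" "rT s 1 = s" "rT (lT a s) b = lT a (rT s b)"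
  using TT by (simp_all add: is_tensor_def is_bimodule_def)

lemma tensT:
  "tens (x + x') y = tens x y + tens x' y" "tens x (y + y') = tens x y + tens x y'"
  "tens (rC x a) y = tens x (lC a y)"
  "lT a (tens x y) = tens (lC a x) y" "rT (tens x y) a = tens x (rC y a)"
  using TT by (simp_all add: is_tensor_def balanced_def)

lemma tensLs:
  "tensL (x + x') y = tensL x y + tensL x' y" "tensL x (y + y') = tensL x y + tensL x y'"
  "tensL (rC x a) y = tensL x (lT a y)"
  using TL by (simp_all add: is_tensor_def balanced_def)

lemma DeltaH:
  "\<Delta> (x + y) = \<Delta> x + \<Delta> y" "\<Delta> (lC a x) = lT a (\<Delta> x)" "\<Delta> (rC x a) = rT (\<Delta> x) a"
  using C by (simp_all add: is_coring_def bimod_hom_def)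

lemma epsH:
  "\<epsilon> (x + y) = \<epsilon> x + \<epsilon> y" "\<epsilon> (lC a x) = a * \<epsilon> x" "\<epsilon> (rC x a) = \<epsilon> x * a"
  using C by (simp_all add: is_coring_def bimod_hom_def)

lemmas S = bmC bmT tensT tensLs DeltaH epsH

lemma addf_lC: "addf (lC a)" by (simp add: addf_def bmC)
lemma addf_rC: "addf (\<lambda>x. rC x a)" by (simp add: addf_def bmC)
lemma addf_lT: "addf (lT a)" by (simp add: addf_def bmT)
lemma addf_rT: "addf (\<lambda>x. rT x a)" by (simp add: addf_def bmT)
lemma addf_Delta: "addf \<Delta>" by (simp add: addf_def DeltaH)
lemma addf_eps: "addf \<epsilon>" by (simp add: addf_def epsH)
lemma addf_tensl: "addf (\<lambda>x. tens x y)" by (simp add: addf_def tensT)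
lemma addf_tensr: "addf (tens x)" by (simp add: addf_def tensT)

lemma lC_0[simp]: "lC a 0 = 0" using addf_0[OF addf_lC] .
lemma rC_0[simp]: "rC 0 a = 0" using addf_0[OF addf_rC] .

definition IE where "IE t = tlift tens (\<lambda>x y. rC x (\<epsilon> y)) t"
definition EI where "EI t = tlift tens (\<lambda>x y. lC (\<epsilon> x) y) t"

lemma bal_IE: "balanced rC lC (\<lambda>x y. rC x (\<epsilon> y))"
  by (simp add: balanced_def S)
lemma bal_EI: "balanced rC lC (\<lambda>x y. lC (\<epsilon> x) y)"
  by (simp add: balanced_def S)

lemma addf_IE: "addf IE" unfolding IE_def by (rule tlift_addf[OF TT bal_IE])
lemma addf_EI: "addf EI" unfolding EI_def by (rule tlift_addf[OF TT bal_EI])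
lemma IE_tens: "IE (tens x y) = rC x (\<epsilon> y)" unfolding IE_def by (rule tlift_tens[OF TT bal_IE])
lemma EI_tens: "EI (tens x y) = lC (\<epsilon> x) y" unfolding EI_def by (rule tlift_tens[OF TT bal_EI])
lemma IE_Delta: "IE (\<Delta> c) = c" unfolding IE_def by (rule cuR)
lemma EI_Delta: "EI (\<Delta> c) = c" unfolding EI_def by (rule cuL)


lemma fwd:
  assumes P: "pi_theta_pair lC rC lT rT tens \<Delta> \<pi> \<Theta>"
  shows "reduced_frobenius_system lC rC lT rT tens \<Delta> \<epsilon> (\<epsilon> \<circ> \<pi>) (\<Theta> 1)"
proof -
  have piH: "\<pi> (s + t) = \<pi> s + \<pi> t" "\<pi> (lT a t) = lC a (\<pi> t)" "\<pi> (rT t a) = rC (\<pi> t) a"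
    for s t a using P unfolding pi_theta_pair_def bimod_hom_def by blast+
  have ThH: "\<Theta> (x + y) = \<Theta> x + \<Theta> y" "\<Theta> (a * x) = lC a (\<Theta> x)" "\<Theta> (x * a) = rC (\<Theta> x) a"
    for x y a using P unfolding pi_theta_pair_def bimod_hom_def by blast+
  have com1: "tlift tens (\<lambda>x y. tens x (\<pi> (tens y c'))) (\<Delta> c) = \<Delta> (\<pi> (tens c c'))"
    and com2: "\<Delta> (\<pi> (tens c c')) = tlift tens (\<lambda>x y. tens (\<pi> (tens c x)) y) (\<Delta> c')"
    and un1: "\<pi> (tens c (\<Theta> 1)) = c" and un2: "\<pi> (tens (\<Theta> 1) c) = c"
    for c c' using P by (simp_all add: pi_theta_pair_def)
  have piD: "\<pi> (tens (lC a x) y) = lC a (\<pi> (tens x y))" "\<pi> (tens x (rC y a)) = rC (\<pi> (tens x y)) a"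
    for a x y using piH(2)[of a "tens x y"] piH(3)[of "tens x y" a] by (simp_all add: tensT)
  have F1: "\<pi> (tens c c') = tlift tens (\<lambda>x y. rC x (\<epsilon> (\<pi> (tens y c')))) (\<Delta> c)" for c c'
  proof -
    have b1: "balanced rC lC (\<lambda>x y. tens x (\<pi> (tens y c')))"
      by (simp add: balanced_def S piH piD)
    have "\<pi> (tens c c') = IE (\<Delta> (\<pi> (tens c c')))" by (simp add: IE_Delta)
    also have "\<dots> = IE (tlift tens (\<lambda>x y. tens x (\<pi> (tens y c'))) (\<Delta> c))" by (simp add: com1)
    also have "\<dots> = tlift tens (\<lambda>x y. IE (tens x (\<pi> (tens y c')))) (\<Delta> c)"
      by (rule tlift_comp[OF TT b1 addf_IE])
    also have "\<dots> = tlift tens (\<lambda>x y. rC x (\<epsilon> (\<pi> (tens y c')))) (\<Delta> c)" by (simp add: IE_tens)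
    finally show ?thesis .
  qed
  have F2: "\<pi> (tens c c') = tlift tens (\<lambda>x y. lC (\<epsilon> (\<pi> (tens c x))) y) (\<Delta> c')" for c c'
  proof -
    have b1: "balanced rC lC (\<lambda>x y. tens (\<pi> (tens c x)) y)"
      by (simp add: balanced_def S piH piD)
    have "\<pi> (tens c c') = EI (\<Delta> (\<pi> (tens c c')))" by (simp add: EI_Delta)
    also have "\<dots> = EI (tlift tens (\<lambda>x y. tens (\<pi> (tens c x)) y) (\<Delta> c'))" by (simp add: com2)
    also have "\<dots> = tlift tens (\<lambda>x y. EI (tens (\<pi> (tens c x)) y)) (\<Delta> c')"
      by (rule tlift_comp[OF TT b1 addf_EI])
    also have "\<dots> = tlift tens (\<lambda>x y. lC (\<epsilon> (\<pi> (tens c x))) y) (\<Delta> c')" by (simp add: EI_tens)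
    finally show ?thesis .
  qed
  have cen: "lC a (\<Theta> 1) = rC (\<Theta> 1) a" for a
    using ThH(2)[of a 1] ThH(3)[of 1 a] by simp
  have hom: "bimod_hom lT rT (*) (*) (\<epsilon> \<circ> \<pi>)"
    by (simp add: bimod_hom_def piH epsH)
  have fr: "tlift tens (\<lambda>x y. rC x ((\<epsilon> \<circ> \<pi>) (tens y c'))) (\<Delta> c) =
             tlift tens (\<lambda>x y. lC ((\<epsilon> \<circ> \<pi>) (tens c x)) y) (\<Delta> c')" for c c'
    using F1[of c c'] F2[of c c'] by simp
  show ?thesis
    unfolding reduced_frobenius_system_def
    using cen hom fr un1 un2 by simp
qed


lemma pair_F1:
  assumes P: "pi_theta_pair lC rC lT rT tens \<Delta> \<pi> \<Theta>"
  shows "\<pi> (tens c c') = tlift tens (\<lambda>x y. rC x (\<epsilon> (\<pi> (tens y c')))) (\<Delta> c)"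
proof -
  have piH: "\<pi> (s + t) = \<pi> s + \<pi> t" "\<pi> (lT a t) = lC a (\<pi> t)" "\<pi> (rT t a) = rC (\<pi> t) a"
    for s t a using P unfolding pi_theta_pair_def bimod_hom_def by blast+
  have com1: "tlift tens (\<lambda>x y. tens x (\<pi> (tens y c'))) (\<Delta> c) = \<Delta> (\<pi> (tens c c'))"
    using P by (simp_all add: pi_theta_pair_def)
  have piD: "\<pi> (tens (lC a x) y) = lC a (\<pi> (tens x y))" "\<pi> (tens x (rC y a)) = rC (\<pi> (tens x y)) a"
    for a x y using piH(2)[of a "tens x y"] piH(3)[of "tens x y" a] by (simp_all add: tensT)
  have b1: "balanced rC lC (\<lambda>x y. tens x (\<pi> (tens y c')))"
    by (simp add: balanced_def S piH piD)
  have "\<pi> (tens c c') = IE (\<Delta> (\<pi> (tens c c')))" by (simp add: IE_Delta)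
  also have "\<dots> = IE (tlift tens (\<lambda>x y. tens x (\<pi> (tens y c'))) (\<Delta> c))" by (simp add: com1)
  also have "\<dots> = tlift tens (\<lambda>x y. IE (tens x (\<pi> (tens y c')))) (\<Delta> c)"
    by (rule tlift_comp[OF TT b1 addf_IE])
  also have "\<dots> = tlift tens (\<lambda>x y. rC x (\<epsilon> (\<pi> (tens y c')))) (\<Delta> c)" by (simp add: IE_tens)
  finally show ?thesis .
qed

lemma inj_pair:
  assumes P1: "pi_theta_pair lC rC lT rT tens \<Delta> \<pi> \<Theta>"
    and P2: "pi_theta_pair lC rC lT rT tens \<Delta> \<pi>' \<Theta>'"
    and E: "\<epsilon> \<circ> \<pi> = \<epsilon> \<circ> \<pi>'" and Th: "\<Theta> 1 = \<Theta>' 1"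
  shows "\<pi> = \<pi>' \<and> \<Theta> = \<Theta>'"
proof
  have a1: "addf \<pi>" using P1 by (simp add: addf_def pi_theta_pair_def bimod_hom_def)
  have a2: "addf \<pi>'" using P2 by (simp add: addf_def pi_theta_pair_def bimod_hom_def)
  have E': "\<epsilon> (\<pi> t) = \<epsilon> (\<pi>' t)" for t using fun_cong[OF E, of t] by simp
  show "\<pi> = \<pi>'"
  proof
    fix t
    show "\<pi> t = \<pi>' t"
      by (rule tens_ext[OF TT a1 a2]) (subst pair_F1[OF P1], subst pair_F1[OF P2], simp add: E')
  qed
  have t1: "\<Theta> (a * x) = lC a (\<Theta> x)" for a x using P1 unfolding pi_theta_pair_def bimod_hom_def by blast
  have t2: "\<Theta>' (a * x) = lC a (\<Theta>' x)" for a x using P2 unfolding pi_theta_pair_def bimod_hom_def by blast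
  show "\<Theta> = \<Theta>'"
  proof
    fix a
    show "\<Theta> a = \<Theta>' a" using t1[of a 1] t2[of a 1] Th by simp
  qed
qed

definition psi where "psi \<gamma> c' = (\<lambda>x y. rC x (\<gamma> (tens y c')))"
definition pp where "pp \<gamma> c c' = tlift tens (psi \<gamma> c') (\<Delta> c)"
definition Pg where "Pg \<gamma> t = tlift tens (pp \<gamma>) t"

lemma rT_tlift: "rT t b = tlift tens (\<lambda>u v. tens u (rC v b)) t"
proof -
  have bb: "balanced rC lC (\<lambda>u v. tens u (rC v b))" by (simp add: balanced_def S)
  show ?thesis
    by (rule tens_ext[OF TT addf_rT tlift_addf[OF TT bb]]) (simp add: tlift_tens[OF TT bb] tensT)
qed

lemma bK: "balanced rC lC (\<lambda>x y. tlift tens (\<lambda>u v. tensL u (tens v y)) (\<Delta> x))"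
proof -
  have bkin: "balanced rC lC (\<lambda>u v. tensL u (tens v y))" for y by (simp add: balanced_def S)
  have e1: "(\<lambda>u v. tensL u (tens v (y + y'))) = (\<lambda>u v. tensL u (tens v y) + tensL u (tens v y'))" for y y'
    by (simp add: S)
  have e2: "(\<lambda>u v. tensL u (tens (rC v a) y)) = (\<lambda>u v. tensL u (tens v (lC a y)))" for a y
    by (simp add: S)
  show ?thesis unfolding balanced_def
  proof (intro conjI allI)
    fix x x' y
    show "tlift tens (\<lambda>u v. tensL u (tens v y)) (\<Delta> (x + x')) =
          tlift tens (\<lambda>u v. tensL u (tens v y)) (\<Delta> x) + tlift tens (\<lambda>u v. tensL u (tens v y)) (\<Delta> x')"
      by (simp add: DeltaH tlift_add[OF TT bkin])
  next
    fix x y y'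
    show "tlift tens (\<lambda>u v. tensL u (tens v (y + y'))) (\<Delta> x) =
          tlift tens (\<lambda>u v. tensL u (tens v y)) (\<Delta> x) + tlift tens (\<lambda>u v. tensL u (tens v y')) (\<Delta> x)"
      unfolding e1 by (rule tlift_fadd[OF TT bkin bkin])
  next
    fix x a y
    show "tlift tens (\<lambda>u v. tensL u (tens v y)) (\<Delta> (rC x a)) =
          tlift tens (\<lambda>u v. tensL u (tens v (lC a y))) (\<Delta> x)"
      unfolding DeltaH using tlift_ract'[OF TT bkin[of y], where a=a and t="\<Delta> x"] e2 bkin by simp
  qed
qed

lemma bLD: "balanced rC lC (\<lambda>x y. tensL x (\<Delta> y))" by (simp add: balanced_def S)


lemma bwd:
  assumes R: "reduced_frobenius_system lC rC lT rT tens \<Delta> \<epsilon> \<gamma> e"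
  shows "pi_theta_pair lC rC lT rT tens \<Delta> (Pg \<gamma>) (\<lambda>a. lC a e) \<and> \<epsilon> \<circ> Pg \<gamma> = \<gamma>"
proof -
  have cen: "lC a e = rC e a" for a using R by (simp add: reduced_frobenius_system_def)
  have gH: "\<gamma> (s + t) = \<gamma> s + \<gamma> t" "\<gamma> (lT a t) = a * \<gamma> t" "\<gamma> (rT t a) = \<gamma> t * a"
    for s t a using R unfolding reduced_frobenius_system_def bimod_hom_def by blast+
  have gD: "\<gamma> (tens (lC a x) y) = a * \<gamma> (tens x y)" "\<gamma> (tens x (rC y a)) = \<gamma> (tens x y) * a"
    for a x y using gH(2)[of a "tens x y"] gH(3)[of "tens x y" a] by (simp_all add: tensT)
  have fro: "tlift tens (\<lambda>x y. rC x (\<gamma> (tens y c'))) (\<Delta> c) =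
             tlift tens (\<lambda>x y. lC (\<gamma> (tens c x)) y) (\<Delta> c')" for c c'
    using R by (simp add: reduced_frobenius_system_def)
  have ue1: "\<gamma> (tens c e) = \<epsilon> c" and ue2: "\<gamma> (tens e c) = \<epsilon> c" for c
    using R by (simp_all add: reduced_frobenius_system_def)
  have addg: "addf \<gamma>" by (simp add: addf_def gH)
  have addgr: "addf (\<lambda>z. \<gamma> (tens c z))" for c by (simp add: addf_def gH tensT)
  have bpsi: "balanced rC lC (psi \<gamma> c')" for c'
    by (simp add: balanced_def psi_def S gH gD)
  have bchi: "balanced rC lC (\<lambda>x y. lC (\<gamma> (tens c x)) y)" for c
    by (simp add: balanced_def S gH gD)
  have pq: "pp \<gamma> c c' = tlift tens (\<lambda>x y. lC (\<gamma> (tens c x)) y) (\<Delta> c')" for c c'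
    unfolding pp_def psi_def by (rule fro)
  have psi_lact: "tlift tens (psi \<gamma> c') (lT a t) = lC a (tlift tens (psi \<gamma> c') t)" for c' a t
    by (rule tlift_lact[OF TT bpsi addf_lC]) (simp add: psi_def S)
  have bpp: "balanced rC lC (pp \<gamma>)"
    unfolding balanced_def
  proof (intro conjI allI)
    fix x x' y
    show "pp \<gamma> (x + x') y = pp \<gamma> x y + pp \<gamma> x' y"
      by (simp add: pp_def DeltaH tlift_add[OF TT bpsi])
  next
    fix x y y'
    have e1: "psi \<gamma> (y + y') = (\<lambda>u v. psi \<gamma> y u v + psi \<gamma> y' u v)"
      by (simp add: psi_def S gH)
    show "pp \<gamma> x (y + y') = pp \<gamma> x y + pp \<gamma> x y'"
      unfolding pp_def e1 by (rule tlift_fadd[OF TT bpsi bpsi])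
  next
    fix x a y
    have e2: "(\<lambda>u v. psi \<gamma> y u (rC v a)) = psi \<gamma> (lC a y)"
      by (simp add: psi_def S)
    show "pp \<gamma> (rC x a) y = pp \<gamma> x (lC a y)"
      unfolding pp_def DeltaH using tlift_ract'[OF TT bpsi[of y], where a=a and t="\<Delta> x"] e2 bpsi
      by simp
  qed
  have Pg_tens: "Pg \<gamma> (tens c c') = pp \<gamma> c c'" for c c'
    unfolding Pg_def by (rule tlift_tens[OF TT bpp])
  have addP: "addf (Pg \<gamma>)" unfolding Pg_def by (rule tlift_addf[OF TT bpp])
  have pp_l: "pp \<gamma> (lC a x) y = lC a (pp \<gamma> x y)" for a x y
    unfolding pp_def DeltaH by (rule psi_lact)
  have pp_r: "pp \<gamma> x (rC y a) = rC (pp \<gamma> x y) a" for a x y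
  proof -
    have "psi \<gamma> (rC y a) = (\<lambda>u v. rC (psi \<gamma> y u v) a)" by (simp add: psi_def S gD)
    then show ?thesis unfolding pp_def
      using tlift_comp[OF TT bpsi[of y] addf_rC[of a], where t="\<Delta> x"] by simp
  qed
  have PgH: "bimod_hom lT rT lC rC (Pg \<gamma>)"
    unfolding bimod_hom_def
  proof (intro conjI allI)
    fix x y show "Pg \<gamma> (x + y) = Pg \<gamma> x + Pg \<gamma> y" using addP by (simp add: addf_def)
  next
    fix a x show "Pg \<gamma> (lT a x) = lC a (Pg \<gamma> x)"
      unfolding Pg_def by (rule tlift_lact[OF TT bpp addf_lC]) (rule pp_l)
  next
    fix x a show "Pg \<gamma> (rT x a) = rC (Pg \<gamma> x) a"
      unfolding Pg_def by (rule tlift_ract[OF TT bpp addf_rC]) (rule pp_r)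
  qed
  have ThH: "bimod_hom (*) (*) lC rC (\<lambda>a. lC a e)"
    unfolding bimod_hom_def
  proof (intro conjI allI)
    fix x y show "lC (x + y) e = lC x e + lC y e" by (simp add: bmC)
  next
    fix a x show "lC (a * x) e = lC a (lC x e)" by (simp add: bmC)
  next
    fix x a show "lC (x * a) e = rC (lC x e) a"
      by (simp add: bmC(3) bmC(7) bmC(9)[symmetric] cen)
  qed
  have com1: "tlift tens (\<lambda>x y. tens x (Pg \<gamma> (tens y c'))) (\<Delta> c) = \<Delta> (Pg \<gamma> (tens c c'))" for c c'
  proof -
    define G where "G = tlift tensL (\<lambda>x t. tens x (tlift tens (psi \<gamma> c') t))"
    have bG: "balanced rC lT (\<lambda>x t. tens x (tlift tens (psi \<gamma> c') t))"
      by (simp add: balanced_def S tlift_add[OF TT bpsi] psi_lact)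
    have aG: "addf G" unfolding G_def by (rule tlift_addf[OF TL bG])
    have Gt: "G (tensL x t) = tens x (tlift tens (psi \<gamma> c') t)" for x t
      unfolding G_def by (rule tlift_tens[OF TL bG])
    have bkin: "balanced rC lC (\<lambda>u v. tensL u (tens v y))" for y by (simp add: balanced_def S)
    have "G (tlift tens (\<lambda>x y. tensL x (\<Delta> y)) (\<Delta> c)) = tlift tens (\<lambda>x y. G (tensL x (\<Delta> y))) (\<Delta> c)"
      by (rule tlift_comp[OF TT bLD aG])
    also have "\<dots> = tlift tens (\<lambda>x y. tens x (Pg \<gamma> (tens y c'))) (\<Delta> c)"
      by (simp add: Gt Pg_tens pp_def)
    finally have L: "G (tlift tens (\<lambda>x y. tensL x (\<Delta> y)) (\<Delta> c)) =
        tlift tens (\<lambda>x y. tens x (Pg \<gamma> (tens y c'))) (\<Delta> c)" .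
    have "G (tlift tens (\<lambda>x y. tlift tens (\<lambda>u v. tensL u (tens v y)) (\<Delta> x)) (\<Delta> c)) =
          tlift tens (\<lambda>x y. G (tlift tens (\<lambda>u v. tensL u (tens v y)) (\<Delta> x))) (\<Delta> c)"
      by (rule tlift_comp[OF TT bK aG])
    also have "\<dots> = tlift tens (\<lambda>x y. tlift tens (\<lambda>u v. G (tensL u (tens v y))) (\<Delta> x)) (\<Delta> c)"
      by (simp add: tlift_comp[OF TT bkin aG])
    also have "\<dots> = tlift tens (\<lambda>x y. rT (\<Delta> x) (\<gamma> (tens y c'))) (\<Delta> c)"
      using tlift_tens[OF TT bpsi, of c'] by (simp add: Gt psi_def rT_tlift)
    also have "\<dots> = tlift tens (\<lambda>x y. \<Delta> (psi \<gamma> c' x y)) (\<Delta> c)"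
      by (simp add: psi_def DeltaH)
    also have "\<dots> = \<Delta> (Pg \<gamma> (tens c c'))"
      by (simp add: Pg_tens pp_def tlift_comp[OF TT bpsi addf_Delta])
    finally have R: "G (tlift tens (\<lambda>x y. tlift tens (\<lambda>u v. tensL u (tens v y)) (\<Delta> x)) (\<Delta> c)) =
        \<Delta> (Pg \<gamma> (tens c c'))" .
    show ?thesis using L R coassoc[of c] by simp
  qed
  have com2: "\<Delta> (Pg \<gamma> (tens c c')) = tlift tens (\<lambda>x y. tens (Pg \<gamma> (tens c x)) y) (\<Delta> c')" for c c'
  proof -
    define G where "G = tlift tensL (\<lambda>u t. lT (\<gamma> (tens c u)) t)"
    have bG: "balanced rC lT (\<lambda>u t. lT (\<gamma> (tens c u)) t)"
      by (simp add: balanced_def S gH gD)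
    have aG: "addf G" unfolding G_def by (rule tlift_addf[OF TL bG])
    have Gt: "G (tensL x t) = lT (\<gamma> (tens c x)) t" for x t
      unfolding G_def by (rule tlift_tens[OF TL bG])
    have bkin: "balanced rC lC (\<lambda>u v. tensL u (tens v y))" for y by (simp add: balanced_def S)
    have "G (tlift tens (\<lambda>x y. tensL x (\<Delta> y)) (\<Delta> c')) = tlift tens (\<lambda>x y. G (tensL x (\<Delta> y))) (\<Delta> c')"
      by (rule tlift_comp[OF TT bLD aG])
    also have "\<dots> = tlift tens (\<lambda>x y. \<Delta> (lC (\<gamma> (tens c x)) y)) (\<Delta> c')"
      by (simp add: Gt DeltaH)
    also have "\<dots> = \<Delta> (Pg \<gamma> (tens c c'))"
      by (simp add: Pg_tens pq tlift_comp[OF TT bchi addf_Delta])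
    finally have L: "G (tlift tens (\<lambda>x y. tensL x (\<Delta> y)) (\<Delta> c')) = \<Delta> (Pg \<gamma> (tens c c'))" .
    have "G (tlift tens (\<lambda>x y. tlift tens (\<lambda>u v. tensL u (tens v y)) (\<Delta> x)) (\<Delta> c')) =
          tlift tens (\<lambda>x y. G (tlift tens (\<lambda>u v. tensL u (tens v y)) (\<Delta> x))) (\<Delta> c')"
      by (rule tlift_comp[OF TT bK aG])
    also have "\<dots> = tlift tens (\<lambda>x y. tlift tens (\<lambda>u v. G (tensL u (tens v y))) (\<Delta> x)) (\<Delta> c')"
      by (simp add: tlift_comp[OF TT bkin aG])
    also have "\<dots> = tlift tens (\<lambda>x y. tlift tens (\<lambda>u v. tens (lC (\<gamma> (tens c u)) v) y) (\<Delta> x)) (\<Delta> c')"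
      by (simp add: Gt tensT)
    also have "\<dots> = tlift tens (\<lambda>x y. tens (Pg \<gamma> (tens c x)) y) (\<Delta> c')"
      by (simp add: Pg_tens pq tlift_comp[OF TT bchi addf_tensl])
    finally have R: "G (tlift tens (\<lambda>x y. tlift tens (\<lambda>u v. tensL u (tens v y)) (\<Delta> x)) (\<Delta> c')) =
        tlift tens (\<lambda>x y. tens (Pg \<gamma> (tens c x)) y) (\<Delta> c')" .
    show ?thesis using L R coassoc[of c'] by simp
  qed
  have un1: "Pg \<gamma> (tens c (lC 1 e)) = c" for c
    using cuR[of c] by (simp add: bmC Pg_tens pp_def psi_def ue1)
  have un2: "Pg \<gamma> (tens (lC 1 e) c) = c" for c
    using cuL[of c] by (simp add: bmC Pg_tens pq ue2)
  have pair: "pi_theta_pair lC rC lT rT tens \<Delta> (Pg \<gamma>) (\<lambda>a. lC a e)"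
    unfolding pi_theta_pair_def using ThH PgH com1 com2 un1 un2 by simp
  have eps: "\<epsilon> (Pg \<gamma> t) = \<gamma> t" for t
  proof (rule tens_ext[OF TT _ addg])
    show "addf (\<lambda>t. \<epsilon> (Pg \<gamma> t))" using addP by (simp add: addf_def epsH)
  next
    fix c c'
    have "\<epsilon> (Pg \<gamma> (tens c c')) = tlift tens (\<lambda>x y. \<epsilon> (lC (\<gamma> (tens c x)) y)) (\<Delta> c')"
      by (simp add: Pg_tens pq tlift_comp[OF TT bchi addf_eps])
    also have "\<dots> = tlift tens (\<lambda>x y. \<gamma> (tens c (rC x (\<epsilon> y)))) (\<Delta> c')"
      by (simp add: epsH gD)
    also have "\<dots> = \<gamma> (tens c (IE (\<Delta> c')))"
      unfolding IE_def by (simp add: tlift_comp[OF TT bal_IE addgr])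
    also have "\<dots> = \<gamma> (tens c c')" by (simp add: IE_Delta)
    finally show "\<epsilon> (Pg \<gamma> (tens c c')) = \<gamma> (tens c c')" .
  qed
  show ?thesis using pair eps by auto
qed

end

theorem lemma2p4:
  fixes lC :: "'a::ring_1 \<Rightarrow> 'c::ab_group_add \<Rightarrow> 'c" and rC :: "'c \<Rightarrow> 'a \<Rightarrow> 'c"
    and lT :: "'a \<Rightarrow> 't::ab_group_add \<Rightarrow> 't" and rT :: "'t \<Rightarrow> 'a \<Rightarrow> 't"
    and tens :: "'c \<Rightarrow> 'c \<Rightarrow> 't"
    and lL :: "'a \<Rightarrow> 'l::ab_group_add \<Rightarrow> 'l" and rL :: "'l \<Rightarrow> 'a \<Rightarrow> 'l"
    and tensL :: "'c \<Rightarrow> 't \<Rightarrow> 'l"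
    and \<Delta> :: "'c \<Rightarrow> 't" and \<epsilon> :: "'c \<Rightarrow> 'a"
  assumes "is_coring lC rC lT rT tens lL rL tensL \<Delta> \<epsilon>"
  shows "bij_betw (\<lambda>(\<pi>, \<Theta>). (\<epsilon> \<circ> \<pi>, \<Theta> 1))
           {(\<pi>, \<Theta>). pi_theta_pair lC rC lT rT tens \<Delta> \<pi> \<Theta>}
           {(\<gamma>, e). reduced_frobenius_system lC rC lT rT tens \<Delta> \<epsilon> \<gamma> e}"
proof -
  interpret cor lC rC lT rT tens lL rL tensL \<Delta> \<epsilon> by (rule cor.intro[OF assms])
  show ?thesis
    unfolding bij_betw_def
  proof (intro conjI)
    show "inj_on (\<lambda>(\<pi>, \<Theta>). (\<epsilon> \<circ> \<pi>, \<Theta> 1)) {(\<pi>, \<Theta>). pi_theta_pair lC rC lT rT tens \<Delta> \<pi> \<Theta>}"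
      unfolding inj_on_def using inj_pair by auto
    show "(\<lambda>(\<pi>, \<Theta>). (\<epsilon> \<circ> \<pi>, \<Theta> 1)) ` {(\<pi>, \<Theta>). pi_theta_pair lC rC lT rT tens \<Delta> \<pi> \<Theta>} =
          {(\<gamma>, e). reduced_frobenius_system lC rC lT rT tens \<Delta> \<epsilon> \<gamma> e}"
    proof
      show "(\<lambda>(\<pi>, \<Theta>). (\<epsilon> \<circ> \<pi>, \<Theta> 1)) ` {(\<pi>, \<Theta>). pi_theta_pair lC rC lT rT tens \<Delta> \<pi> \<Theta>}
            \<subseteq> {(\<gamma>, e). reduced_frobenius_system lC rC lT rT tens \<Delta> \<epsilon> \<gamma> e}"
        using fwd by auto
    next
      show "{(\<gamma>, e). reduced_frobenius_system lC rC lT rT tens \<Delta> \<epsilon> \<gamma> e} \<subseteq>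
            (\<lambda>(\<pi>, \<Theta>). (\<epsilon> \<circ> \<pi>, \<Theta> 1)) ` {(\<pi>, \<Theta>). pi_theta_pair lC rC lT rT tens \<Delta> \<pi> \<Theta>}"
      proof clarify
        fix \<gamma> e
        assume R: "reduced_frobenius_system lC rC lT rT tens \<Delta> \<epsilon> \<gamma> e"
        have "(Pg \<gamma>, \<lambda>a. lC a e) \<in> {(\<pi>, \<Theta>). pi_theta_pair lC rC lT rT tens \<Delta> \<pi> \<Theta>}"
          using bwd[OF R] by simp
        moreover have "(\<gamma>, e) = (\<lambda>(\<pi>, \<Theta>). (\<epsilon> \<circ> \<pi>, \<Theta> 1)) (Pg \<gamma>, \<lambda>a. lC a e)"
          using bwd[OF R] by (simp add: bmC)
        ultimately show "(\<gamma>, e) \<in> (\<lambda>(\<pi>, \<Theta>). (\<epsilon> \<circ> \<pi>, \<Theta> 1)) ` {(\<pi>, \<Theta>). pi_theta_pair lC rC lT rT tens \<Delta> \<pi> \<Theta>}"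
          by (rule rev_image_eqI)
      qed
    qed
  qed
qed

end
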